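(* The sum over all finite groups $G$ of the ring homomorphisms $\mathrm{B}^\times(G)\to\mathrm{B}(\mathcal{R})$, $$\bigoplus_G\mathrm{B}^\times(G)\longrightarrow\mathrm{B}(\mathcal{R}),$$ is surjective.
   Context: A rack is a set $R$ with a binary operation $\rhd$ such that every left multiplication $\ell_a\colon b\mapsto a\rhd b$ is a bijection and $a\rhd(b\rhd c)=(a\rhd b)\rhd(a\rhd c)$ for all $a,b,c$. A subrack is a subset $S$ with $\ell_s(S)=S$ for all $s\in S$; a decomposition of $R$ into $S$ and $T$ means $S,T$ are disjoint subracks (possibly empty) with $S\cup T=R$. The Burnside ring of finite racks $\mathrm{B}(\mathcal{R})$ is the abelian group generated by symbols $b(R)$, one for each finite rack $R$, subject to $b(R_1)=b(R_2)$ whenever $R_1\cong R_2$ and $b(R)=b(S)+b(T)$ whenever $R$ decomposes into $S$ and $T$, with ring structure $b(R)b(R')=b(R\times R')$. For a finite group $G$, a crossed $G$-set is a finite $G$-set $X$ with a $G$-equivariant map $\delta\colon X\to\mathrm{Ad}(G)$, where $\mathrm{Ad}(G)$ is $G$ with conjugation action. The crossed Burnside ring $\mathrm{B}^\times(G)$ is the Grothendieck group of isomorphism classes of finite crossed $G$-sets with respect to disjoint union (with its ring structure). The homomorphism $\mathrm{B}^\times(G)\to\mathrm{B}(\mathcal{R})$ sends the class of $\delta\colon X\to\mathrm{Ad}(G)$ to $b(X,\rhd)$, where $x\rhd y=\delta(x)y$. *)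

theory Defs
  imports "HOL-Algebra.Free_Abelian_Groups" "HOL-Algebra.Group_Action"
begin

type_synonym rack = "nat set \<times> (nat \<Rightarrow> nat \<Rightarrow> nat)"

definition is_rack :: "nat set \<Rightarrow> (nat \<Rightarrow> nat \<Rightarrow> nat) \<Rightarrow> bool" where
  "is_rack R op \<longleftrightarrow>
     (\<forall>a\<in>R. bij_betw (op a) R R) \<and>
     (\<forall>a\<in>R. \<forall>b\<in>R. \<forall>c\<in>R. op a (op b c) = op (op a b) (op a c))"

definition finite_racks :: "rack set" where
  "finite_racks = {(R, op). finite R \<and> is_rack R op}"

definition rack_iso :: "rack \<Rightarrow> rack \<Rightarrow> bool" where
  "rack_iso X Y \<longleftrightarrow>
     (\<exists>f. bij_betw f (fst X) (fst Y) \<and>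
          (\<forall>a\<in>fst X. \<forall>b\<in>fst X. f (snd X a b) = snd Y (f a) (f b)))"

definition is_subrack :: "nat set \<Rightarrow> (nat \<Rightarrow> nat \<Rightarrow> nat) \<Rightarrow> nat set \<Rightarrow> bool" where
  "is_subrack R op S \<longleftrightarrow> S \<subseteq> R \<and> (\<forall>s\<in>S. op s ` S = S)"

definition rack_decomp :: "nat set \<Rightarrow> (nat \<Rightarrow> nat \<Rightarrow> nat) \<Rightarrow> nat set \<Rightarrow> nat set \<Rightarrow> bool" where
  "rack_decomp R op S T \<longleftrightarrow>
     is_subrack R op S \<and> is_subrack R op T \<and> S \<inter> T = {} \<and> S \<union> T = R"

definition rack_relations :: "(rack \<Rightarrow>\<^sub>0 int) set" where
  "rack_relations =
     {frag_of X - frag_of Y | X Y. X \<in> finite_racks \<and> Y \<in> finite_racks \<and> rack_iso X Y}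
   \<union> {frag_of (R, op) - frag_of (S, op) - frag_of (T, op) | R op S T.
        (R, op) \<in> finite_racks \<and> rack_decomp R op S T}"

definition free_racks :: "(rack \<Rightarrow>\<^sub>0 int) monoid" where
  "free_racks = free_Abelian_group finite_racks"

definition rack_rel_subgroup :: "(rack \<Rightarrow>\<^sub>0 int) set" where
  "rack_rel_subgroup = generate free_racks rack_relations"

text \<open>The Burnside ring of finite racks B(R), as an (additive, written
  multiplicatively in HOL-Algebra) abelian group: free abelian group on finite
  racks modulo the isomorphism and decomposition relations.\<close>
definition burnside_racks :: "(rack \<Rightarrow>\<^sub>0 int) set monoid" where
  "burnside_racks = free_racks Mod rack_rel_subgroup"

text \<open>A crossed G-set: carrier X, action act (act g is a bijection of X,
  extensional outside X as in HOL-Algebra's group_action), and map delta.\<close>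
type_synonym 'g crossed_set = "nat set \<times> ('g \<Rightarrow> nat \<Rightarrow> nat) \<times> (nat \<Rightarrow> 'g)"

definition crossed_sets :: "('g, 'b) monoid_scheme \<Rightarrow> 'g crossed_set set" where
  "crossed_sets G = {(X, act, \<delta>). finite X \<and> group_action G X act \<and>
      (\<forall>x\<in>X. \<delta> x \<in> carrier G) \<and>
      (\<forall>g\<in>carrier G. \<forall>x\<in>X. \<delta> (act g x) = g \<otimes>\<^bsub>G\<^esub> \<delta> x \<otimes>\<^bsub>G\<^esub> inv\<^bsub>G\<^esub> g)}"

definition crossed_iso :: "('g, 'b) monoid_scheme \<Rightarrow> 'g crossed_set \<Rightarrow> 'g crossed_set \<Rightarrow> bool" where
  "crossed_iso G A B \<longleftrightarrow>
     (case A of (X, act, \<delta>) \<Rightarrow> case B of (Y, act', \<delta>') \<Rightarrow>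
       (\<exists>f. bij_betw f X Y \<and> (\<forall>g\<in>carrier G. \<forall>x\<in>X. f (act g x) = act' g (f x)) \<and>
            (\<forall>x\<in>X. \<delta>' (f x) = \<delta> x)))"

definition crossed_restrict :: "'g crossed_set \<Rightarrow> nat set \<Rightarrow> 'g crossed_set" where
  "crossed_restrict A Y = (case A of (X, act, \<delta>) \<Rightarrow> (Y, \<lambda>g. restrict (act g) Y, \<delta>))"

definition crossed_decomp :: "('g, 'b) monoid_scheme \<Rightarrow> 'g crossed_set \<Rightarrow> nat set \<Rightarrow> nat set \<Rightarrow> bool" where
  "crossed_decomp G A Y Z \<longleftrightarrow>
     (case A of (X, act, \<delta>) \<Rightarrow>
        (\<forall>g\<in>carrier G. act g ` Y \<subseteq> Y \<and> act g ` Z \<subseteq> Z) \<and>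
        Y \<inter> Z = {} \<and> Y \<union> Z = X)"

definition crossed_relations :: "('g, 'b) monoid_scheme \<Rightarrow> ('g crossed_set \<Rightarrow>\<^sub>0 int) set" where
  "crossed_relations G =
     {frag_of A - frag_of B | A B. A \<in> crossed_sets G \<and> B \<in> crossed_sets G \<and> crossed_iso G A B}
   \<union> {frag_of A - frag_of (crossed_restrict A Y) - frag_of (crossed_restrict A Z) | A Y Z.
        A \<in> crossed_sets G \<and> crossed_decomp G A Y Z}"

definition free_crossed :: "('g, 'b) monoid_scheme \<Rightarrow> ('g crossed_set \<Rightarrow>\<^sub>0 int) monoid" where
  "free_crossed G = free_Abelian_group (crossed_sets G)"

text \<open>The crossed Burnside ring B^x(G) as an abelian group: the Grothendieck
  group of isomorphism classes of finite crossed G-sets under disjoint union,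
  presented as the free abelian group on crossed G-sets modulo isomorphism and
  disjoint-union relations.\<close>
definition crossed_burnside :: "('g, 'b) monoid_scheme \<Rightarrow> ('g crossed_set \<Rightarrow>\<^sub>0 int) set monoid" where
  "crossed_burnside G = free_crossed G Mod generate (free_crossed G) (crossed_relations G)"

definition crossed_to_rack :: "'g crossed_set \<Rightarrow> rack" where
  "crossed_to_rack A = (case A of (X, act, \<delta>) \<Rightarrow> (X, \<lambda>x y. act (\<delta> x) y))"

definition crossed_to_rack_free :: "('g crossed_set \<Rightarrow>\<^sub>0 int) \<Rightarrow> (rack \<Rightarrow>\<^sub>0 int)" where
  "crossed_to_rack_free = frag_extend (\<lambda>A. frag_of (crossed_to_rack A))"

text \<open>Induced map on the quotients: a coset C is sent to the coset of the image
  of (any of) its representatives.\<close>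
definition burnside_map :: "('g crossed_set \<Rightarrow>\<^sub>0 int) set \<Rightarrow> (rack \<Rightarrow>\<^sub>0 int) set" where
  "burnside_map C = (\<Union>c\<in>C. r_coset free_racks rack_rel_subgroup (crossed_to_rack_free c))"

end

theory Submission
  imports Defs
begin

lemma subrack_is_rack:
  assumes "is_rack R op" "is_subrack R op S"
  shows "is_rack S op"
proof -
  have SR: "S \<subseteq> R" and im: "\<And>s. s \<in> S \<Longrightarrow> op s ` S = S"
    using assms(2) by (auto simp: is_subrack_def)
  show ?thesis unfolding is_rack_def
  proof (intro conjI ballI)
    fix a assume a: "a \<in> S"
    have "inj_on (op a) R" using assms(1) a SR by (auto simp: is_rack_def bij_betw_def)
    hence "inj_on (op a) S" using SR inj_on_subset by blast
    thus "bij_betw (op a) S S" using im[OF a] by (simp add: bij_betw_def)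
  next
    fix a b c assume "a \<in> S" "b \<in> S" "c \<in> S"
    hence "a \<in> R" "b \<in> R" "c \<in> R" using SR by auto
    thus "op a (op b c) = op (op a b) (op a c)" using assms(1) by (simp add: is_rack_def)
  qed
qed

lemma rack_relations_carrier: "rack_relations \<subseteq> carrier free_racks"
proof
  fix r assume "r \<in> rack_relations"
  then show "r \<in> carrier free_racks"
  proof (unfold rack_relations_def, elim UnE CollectE exE conjE)
    fix X Y assume "r = frag_of X - frag_of Y" "X \<in> finite_racks" "Y \<in> finite_racks"
    then show ?thesis using keys_diff[of "frag_of X" "frag_of Y"]
      by (auto simp: free_racks_def keys_frag_of)
  next
    fix R op S T assume r: "r = frag_of (R, op) - frag_of (S, op) - frag_of (T, op)"
      and fr: "(R, op) \<in> finite_racks" and d: "rack_decomp R op S T"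
    have "(S, op) \<in> finite_racks" "(T, op) \<in> finite_racks"
      using fr d subrack_is_rack[of R op] finite_subset
      by (auto simp: finite_racks_def rack_decomp_def is_subrack_def)
    then show ?thesis using r fr keys_diff[of "frag_of (R, op) - frag_of (S, op)" "frag_of (T, op)"]
        keys_diff[of "frag_of (R, op)" "frag_of (S, op)"]
      by (auto simp: free_racks_def keys_frag_of)
  qed
qed

lemma H_subgroup: "subgroup rack_rel_subgroup free_racks"
  unfolding rack_rel_subgroup_def
  by (rule group.generate_is_subgroup) (auto simp: free_racks_def rack_relations_carrier[unfolded free_racks_def])

lemma H_normal: "normal rack_rel_subgroup free_racks"
  using comm_group.subgroup_imp_normal[OF abelian_free_Abelian_group H_subgroup[unfolded free_racks_def]]
  by (simp add: free_racks_def)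

lemma H_carrier: "r \<in> rack_rel_subgroup \<Longrightarrow> Poly_Mapping.keys r \<subseteq> finite_racks"
proof -
  assume "r \<in> rack_rel_subgroup"
  hence "r \<in> carrier free_racks" using subgroup.subset[OF H_subgroup] by blast
  thus ?thesis by (simp add: free_racks_def)
qed

lemma H_rel: "r \<in> rack_relations \<Longrightarrow> r \<in> rack_rel_subgroup"
  by (simp add: rack_rel_subgroup_def generate.incl)

lemma H_neg: "r \<in> rack_rel_subgroup \<Longrightarrow> - r \<in> rack_rel_subgroup"
  using subgroup.m_inv_closed[OF H_subgroup, of r] H_carrier[of r]
  by (simp add: free_racks_def)

lemma H_add: "r \<in> rack_rel_subgroup \<Longrightarrow> s \<in> rack_rel_subgroup \<Longrightarrow> r + s \<in> rack_rel_subgroup"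
  using subgroup.m_closed[OF H_subgroup, of r s] by (simp add: free_racks_def)

lemma H_zero: "0 \<in> rack_rel_subgroup"
  using subgroup.one_closed[OF H_subgroup] by (simp add: free_racks_def)

lemma coset_eq:
  assumes "Poly_Mapping.keys a \<subseteq> finite_racks" "Poly_Mapping.keys b \<subseteq> finite_racks"
    "a - b \<in> rack_rel_subgroup"
  shows "rack_rel_subgroup #>\<^bsub>free_racks\<^esub> a = rack_rel_subgroup #>\<^bsub>free_racks\<^esub> b"
proof -
  have "a \<in> rack_rel_subgroup #>\<^bsub>free_racks\<^esub> b"
    unfolding r_coset_def using assms(3) by (auto simp: free_racks_def intro!: bexI[where x="a - b"])
  thus ?thesis
    using group.repr_independence[where G=free_racks and x=b and y=a and H=rack_rel_subgroup] assms H_subgroup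
    by (simp add: free_racks_def)
qed

lemma ga_group: "group_action G X act \<Longrightarrow> group G"
  by (simp add: group_action_def group_hom_def)

lemma ga_one:
  assumes "group_action G X act" "x \<in> X" shows "act \<one>\<^bsub>G\<^esub> x = x"
proof -
  have "act \<one>\<^bsub>G\<^esub> = (\<lambda>x\<in>X. x)" using group_action.id_eq_one[OF assms(1)] by simp
  thus ?thesis using assms(2) by simp
qed

lemma ga_inv1:
  fixes G (structure)
  assumes "group_action G X act" "g \<in> carrier G" "x \<in> X"
  shows "act g (act (inv g) x) = x"
proof -
  interpret group G using ga_group[OF assms(1)] .
  have ig: "inv g \<in> carrier G" using assms(2) by simp
  have "act (g \<otimes> inv g) x = act g (act (inv g) x)"
    by (rule group_action.composition_rule[OF assms(1) assms(3) assms(2) ig])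
  moreover have "g \<otimes> inv g = \<one>" using assms(2) by simp
  ultimately show ?thesis using ga_one[OF assms(1) assms(3)] by simp
qed

lemma ga_inv2:
  fixes G (structure)
  assumes "group_action G X act" "g \<in> carrier G" "x \<in> X"
  shows "act (inv g) (act g x) = x"
proof -
  interpret group G using ga_group[OF assms(1)] .
  have ig: "inv g \<in> carrier G" using assms(2) by simp
  have "act (inv g \<otimes> g) x = act (inv g) (act g x)"
    by (rule group_action.composition_rule[OF assms(1) assms(3) ig assms(2)])
  moreover have "inv g \<otimes> g = \<one>" using assms(2) by simp
  ultimately show ?thesis using ga_one[OF assms(1) assms(3)] by simp
qed

lemma ga_closed: "group_action G X act \<Longrightarrow> g \<in> carrier G \<Longrightarrow> x \<in> X \<Longrightarrow> act g x \<in> X"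
  by (rule group_action.element_image[of G X act g x "act g x"]) auto

lemma crossed_rack:
  fixes G (structure)
  assumes "(X, act, \<delta>) \<in> crossed_sets G"
  shows "crossed_to_rack (X, act, \<delta>) \<in> finite_racks"
proof -
  have fin: "finite X" and ga: "group_action G X act" and dc: "\<And>x. x \<in> X \<Longrightarrow> \<delta> x \<in> carrier G"
    and eq: "\<And>g x. g \<in> carrier G \<Longrightarrow> x \<in> X \<Longrightarrow> \<delta> (act g x) = g \<otimes>\<^bsub>G\<^esub> \<delta> x \<otimes>\<^bsub>G\<^esub> inv\<^bsub>G\<^esub> g"
    using assms by (auto simp: crossed_sets_def)
  interpret group G using ga_group[OF ga] .
  have "is_rack X (\<lambda>x y. act (\<delta> x) y)" unfolding is_rack_def
  proof (intro conjI ballI)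
    fix a assume "a \<in> X"
    then have "act (\<delta> a) \<in> Bij X" using group_action.bij_prop0[OF ga] dc by blast
    then show "bij_betw (act (\<delta> a)) X X" by (simp add: Bij_def)
  next
    fix a b c assume abc: "a \<in> X" "b \<in> X" "c \<in> X"
    let ?a = "\<delta> a" and ?b = "\<delta> b"
    have ca: "?a \<in> carrier G" "?b \<in> carrier G" using abc dc by auto
    have "act (\<delta> (act ?a b)) (act ?a c) = act (?a \<otimes> ?b \<otimes> inv ?a) (act ?a c)"
      using eq ca abc by simp
    also have "\<dots> = act ?a (act ?b (act (inv ?a) (act ?a c)))"
      using group_action.composition_rule[OF ga] ca abc ga_closed[OF ga] by simp
    also have "\<dots> = act ?a (act ?b c)" using ga_inv2[OF ga] ca abc by simp
    finally show "act ?a (act ?b c) = act (\<delta> (act ?a b)) (act ?a c)" by simp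
  qed
  then show ?thesis using fin by (simp add: crossed_to_rack_def finite_racks_def)
qed

lemma crossed_to_rack_free_carrier:
  assumes "Poly_Mapping.keys d \<subseteq> crossed_sets G"
  shows "Poly_Mapping.keys (crossed_to_rack_free d) \<subseteq> finite_racks"
proof -
  have im: "crossed_to_rack ` crossed_sets G \<subseteq> finite_racks"
    using crossed_rack by (metis image_subsetI prod_cases3)
  then show ?thesis using keys_frag_extend[of "\<lambda>A. frag_of (crossed_to_rack A)" d] assms
    unfolding crossed_to_rack_free_def keys_frag_of by blast
qed

lemma ga_image_eq:
  assumes "group_action G X act" "g \<in> carrier G" "Y \<subseteq> X" "\<forall>g\<in>carrier G. act g ` Y \<subseteq> Y"
  shows "act g ` Y = Y"
proof
  show "act g ` Y \<subseteq> Y" using assms(4,2) by (rule bspec)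
  show "Y \<subseteq> act g ` Y"
  proof
    fix y assume y: "y \<in> Y"
    have ig: "inv\<^bsub>G\<^esub> g \<in> carrier G" using group.inv_closed[OF ga_group[OF assms(1)] assms(2)] .
    have "act (inv\<^bsub>G\<^esub> g) ` Y \<subseteq> Y" using assms(4) ig by (rule bspec)
    hence "act (inv\<^bsub>G\<^esub> g) y \<in> Y" using y by (meson image_subset_iff)
    moreover have "y = act g (act (inv\<^bsub>G\<^esub> g) y)" using ga_inv1[OF assms(1,2), of y] y assms(3) by (simp add: subsetD)
    ultimately show "y \<in> act g ` Y" by blast
  qed
qed

lemma restrict_crossed_gen:
  assumes A: "(X, act, \<delta>) \<in> crossed_sets G" and YX: "Y \<subseteq> X"
    and inv: "\<forall>g\<in>carrier G. act g ` Y \<subseteq> Y"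
  shows "crossed_restrict (X, act, \<delta>) Y \<in> crossed_sets G"
proof -
  have fin: "finite X" and ga: "group_action G X act" and dc: "\<And>x. x \<in> X \<Longrightarrow> \<delta> x \<in> carrier G"
    and eq: "\<And>g x. g \<in> carrier G \<Longrightarrow> x \<in> X \<Longrightarrow> \<delta> (act g x) = g \<otimes>\<^bsub>G\<^esub> \<delta> x \<otimes>\<^bsub>G\<^esub> inv\<^bsub>G\<^esub> g"
    using A unfolding crossed_sets_def mem_Collect_eq case_prod_conv by blast+
  have grp: "group G" using ga_group[OF ga] .
  have bij: "restrict (act g) Y \<in> Bij Y" if g: "g \<in> carrier G" for g
  proof -
    have "inj_on (act g) X" using group_action.inj_prop[OF ga g] .
    hence "inj_on (act g) Y" using YX inj_on_subset by blast
    hence "inj_on (restrict (act g) Y) Y" by (simp add: inj_on_def)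
    moreover have "restrict (act g) Y ` Y = Y" using ga_image_eq[OF ga g YX inv] by simp
    ultimately show ?thesis by (simp add: Bij_def bij_betw_def)
  qed
  have GA: "group_action G Y (\<lambda>g. restrict (act g) Y)"
    unfolding group_action_def group_hom_def group_hom_axioms_def
  proof (intro conjI)
    show "group G" by (rule grp)
    show "group (BijGroup Y)" by (rule group_BijGroup)
    show "(\<lambda>g. restrict (act g) Y) \<in> hom G (BijGroup Y)"
      unfolding hom_def
    proof (intro CollectI conjI ballI)
      show "(\<lambda>g. restrict (act g) Y) \<in> carrier G \<rightarrow> carrier (BijGroup Y)"
        using bij by (auto simp: BijGroup_def)
    next
      fix g h assume g: "g \<in> carrier G" and h: "h \<in> carrier G"
      have "restrict (act (g \<otimes>\<^bsub>G\<^esub> h)) Y = compose Y (restrict (act g) Y) (restrict (act h) Y)"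
      proof (rule ext)
        fix x show "restrict (act (g \<otimes>\<^bsub>G\<^esub> h)) Y x = compose Y (restrict (act g) Y) (restrict (act h) Y) x"
        proof (cases "x \<in> Y")
          case True
          have "act h x \<in> Y" using inv h True by blast
          moreover have "act (g \<otimes>\<^bsub>G\<^esub> h) x = act g (act h x)"
            using group_action.composition_rule[OF ga _ g h] True YX by (meson subsetD)
          ultimately show ?thesis using True by (simp add: compose_def)
        qed (simp add: compose_def)
      qed
      then show "restrict (act (g \<otimes>\<^bsub>G\<^esub> h)) Y = restrict (act g) Y \<otimes>\<^bsub>BijGroup Y\<^esub> restrict (act h) Y"
        using bij[OF g] bij[OF h] by (simp add: BijGroup_def)
    qed
  qed
  have E: "\<forall>g\<in>carrier G. \<forall>x\<in>Y. \<delta> (restrict (act g) Y x) = g \<otimes>\<^bsub>G\<^esub> \<delta> x \<otimes>\<^bsub>G\<^esub> inv\<^bsub>G\<^esub> g"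
  proof (intro ballI)
    fix g x assume "g \<in> carrier G" "x \<in> Y"
    then show "\<delta> (restrict (act g) Y x) = g \<otimes>\<^bsub>G\<^esub> \<delta> x \<otimes>\<^bsub>G\<^esub> inv\<^bsub>G\<^esub> g"
      using eq[of g x] YX by (simp add: subsetD)
  qed
  have F: "finite Y" using finite_subset[OF YX fin] .
  have D: "\<forall>x\<in>Y. \<delta> x \<in> carrier G" using dc YX by blast
  have "finite Y \<and> group_action G Y (\<lambda>g. restrict (act g) Y) \<and> (\<forall>x\<in>Y. \<delta> x \<in> carrier G) \<and>
      (\<forall>g\<in>carrier G. \<forall>x\<in>Y. \<delta> (restrict (act g) Y x) = g \<otimes>\<^bsub>G\<^esub> \<delta> x \<otimes>\<^bsub>G\<^esub> inv\<^bsub>G\<^esub> g)"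
    using F GA D E by (intro conjI)
  then show ?thesis unfolding crossed_sets_def crossed_restrict_def mem_Collect_eq case_prod_conv prod.case
    by assumption
qed

lemma crossed_relations_carrier: "crossed_relations G \<subseteq> carrier (free_crossed G)"
proof
  fix r assume "r \<in> crossed_relations G"
  then show "r \<in> carrier (free_crossed G)"
  proof (unfold crossed_relations_def, elim UnE CollectE exE conjE)
    fix A B assume "r = frag_of A - frag_of B" "A \<in> crossed_sets G" "B \<in> crossed_sets G"
    then have "Poly_Mapping.keys r \<subseteq> crossed_sets G" using keys_diff[of "frag_of A" "frag_of B"]
      unfolding keys_frag_of by blast
    thus ?thesis by (simp add: free_crossed_def)
  next
    fix A Y Z assume r: "r = frag_of A - frag_of (crossed_restrict A Y) - frag_of (crossed_restrict A Z)"
      and A: "A \<in> crossed_sets G" and d: "crossed_decomp G A Y Z"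
    obtain X act \<delta> where Aeq: "A = (X, act, \<delta>)" by (cases A) auto
    have dd: "\<forall>g\<in>carrier G. act g ` Y \<subseteq> Y" "\<forall>g\<in>carrier G. act g ` Z \<subseteq> Z" "Y \<subseteq> X" "Z \<subseteq> X"
      using d unfolding Aeq crossed_decomp_def prod.case by blast+
    have A': "(X, act, \<delta>) \<in> crossed_sets G" using A Aeq by simp
    have "crossed_restrict A Y \<in> crossed_sets G" "crossed_restrict A Z \<in> crossed_sets G"
      unfolding Aeq using restrict_crossed_gen[OF A' dd(3) dd(1)] restrict_crossed_gen[OF A' dd(4) dd(2)] by blast+
    moreover have "Poly_Mapping.keys r \<subseteq> {A, crossed_restrict A Y, crossed_restrict A Z}"
      using r keys_diff[of "frag_of A - frag_of (crossed_restrict A Y)" "frag_of (crossed_restrict A Z)"]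
        keys_diff[of "frag_of A" "frag_of (crossed_restrict A Y)"] unfolding keys_frag_of by blast
    ultimately have "Poly_Mapping.keys r \<subseteq> crossed_sets G" using A by blast
    thus ?thesis by (simp add: free_crossed_def)
  qed
qed

lemma H_iso:
  assumes "P \<in> finite_racks" "Q \<in> finite_racks" "rack_iso P Q"
  shows "frag_of P - frag_of Q \<in> rack_rel_subgroup"
proof (rule H_rel)
  show "frag_of P - frag_of Q \<in> rack_relations"
    unfolding rack_relations_def by (rule UnI1) (use assms in blast)
qed

lemma H_dec:
  assumes "(R, op) \<in> finite_racks" "rack_decomp R op S T"
  shows "frag_of (R, op) - frag_of (S, op) - frag_of (T, op) \<in> rack_rel_subgroup"
proof (rule H_rel)
  show "frag_of (R, op) - frag_of (S, op) - frag_of (T, op) \<in> rack_relations"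
    unfolding rack_relations_def by (rule UnI2) (use assms in blast)
qed

lemma piece_lemma:
  assumes A: "(X, act, \<delta>) \<in> crossed_sets G" and YX: "Y \<subseteq> X"
    and inv: "\<forall>g\<in>carrier G. act g ` Y \<subseteq> Y"
  shows "is_subrack X (\<lambda>x y. act (\<delta> x) y) Y"
    and "frag_of (Y, \<lambda>x y. act (\<delta> x) y) - frag_of (crossed_to_rack (crossed_restrict (X, act, \<delta>) Y))
           \<in> rack_rel_subgroup"
proof -
  have ga: "group_action G X act" and dc: "\<And>x. x \<in> X \<Longrightarrow> \<delta> x \<in> carrier G"
    using A unfolding crossed_sets_def mem_Collect_eq case_prod_conv by blast+
  show sub: "is_subrack X (\<lambda>x y. act (\<delta> x) y) Y"
    unfolding is_subrack_def
  proof (intro conjI ballI)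
    show "Y \<subseteq> X" by (rule YX)
    fix s assume "s \<in> Y"
    hence "\<delta> s \<in> carrier G" using dc YX by blast
    thus "(\<lambda>y. act (\<delta> s) y) ` Y = Y" using ga_image_eq[OF ga _ YX inv] by simp
  qed
  have XR: "(X, \<lambda>x y. act (\<delta> x) y) \<in> finite_racks"
    using crossed_rack[OF A] by (simp add: crossed_to_rack_def)
  have YR: "(Y, \<lambda>x y. act (\<delta> x) y) \<in> finite_racks"
    using XR sub subrack_is_rack finite_subset[OF YX] by (auto simp: finite_racks_def)
  have R2: "crossed_to_rack (crossed_restrict (X, act, \<delta>) Y) \<in> finite_racks"
    using restrict_crossed_gen[OF A YX inv] crossed_rack
    by (simp add: crossed_restrict_def)
  have eqr: "crossed_to_rack (crossed_restrict (X, act, \<delta>) Y) = (Y, \<lambda>x. restrict (act (\<delta> x)) Y)"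
    by (simp add: crossed_to_rack_def crossed_restrict_def)
  have "rack_iso (Y, \<lambda>x y. act (\<delta> x) y) (crossed_to_rack (crossed_restrict (X, act, \<delta>) Y))"
    unfolding eqr rack_iso_def fst_conv snd_conv
  proof (intro exI[of _ id] conjI ballI)
    show "bij_betw id Y Y" by simp
    fix a b assume "a \<in> Y" "b \<in> Y"
    then show "id (act (\<delta> a) b) = restrict (act (\<delta> (id a))) Y (id b)" by simp
  qed
  then show "frag_of (Y, \<lambda>x y. act (\<delta> x) y) - frag_of (crossed_to_rack (crossed_restrict (X, act, \<delta>) Y))
           \<in> rack_rel_subgroup"
    using YR R2 by (intro H_iso)
qed

lemma phi_rel:
  assumes "r \<in> crossed_relations G"
  shows "crossed_to_rack_free r \<in> rack_rel_subgroup"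
  using assms
proof (unfold crossed_relations_def, elim UnE CollectE exE conjE)
  fix A B assume r: "r = frag_of A - frag_of B" and A: "A \<in> crossed_sets G" and B: "B \<in> crossed_sets G"
    and iso: "crossed_iso G A B"
  obtain X act \<delta> where Aeq: "A = (X, act, \<delta>)" by (cases A) auto
  obtain Y act' \<delta>' where Beq: "B = (Y, act', \<delta>')" by (cases B) auto
  have dc: "\<And>x. x \<in> X \<Longrightarrow> \<delta> x \<in> carrier G"
    using A unfolding Aeq crossed_sets_def mem_Collect_eq case_prod_conv by blast
  obtain f where f: "bij_betw f X Y" "\<forall>g\<in>carrier G. \<forall>x\<in>X. f (act g x) = act' g (f x)"
    "\<forall>x\<in>X. \<delta>' (f x) = \<delta> x"
    using iso unfolding Aeq Beq crossed_iso_def prod.case by blast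
  have "rack_iso (crossed_to_rack A) (crossed_to_rack B)"
    unfolding Aeq Beq crossed_to_rack_def prod.case rack_iso_def fst_conv snd_conv
  proof (intro exI[of _ f] conjI ballI)
    show "bij_betw f X Y" by (rule f(1))
    fix a b assume a: "a \<in> X" and b: "b \<in> X"
    have "\<delta> a \<in> carrier G" using dc a .
    then show "f (act (\<delta> a) b) = act' (\<delta>' (f a)) (f b)" using f(2,3) a b by simp
  qed
  moreover have "crossed_to_rack A \<in> finite_racks" "crossed_to_rack B \<in> finite_racks"
    using crossed_rack A B Aeq Beq by auto
  ultimately have "frag_of (crossed_to_rack A) - frag_of (crossed_to_rack B) \<in> rack_rel_subgroup"
    by (intro H_iso)
  then show ?thesis
    by (simp add: r crossed_to_rack_free_def frag_extend_diff)
next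
  fix A Y Z assume r: "r = frag_of A - frag_of (crossed_restrict A Y) - frag_of (crossed_restrict A Z)"
    and A: "A \<in> crossed_sets G" and d: "crossed_decomp G A Y Z"
  obtain X act \<delta> where Aeq: "A = (X, act, \<delta>)" by (cases A) auto
  have dd: "\<forall>g\<in>carrier G. act g ` Y \<subseteq> Y" "\<forall>g\<in>carrier G. act g ` Z \<subseteq> Z" "Y \<subseteq> X" "Z \<subseteq> X"
    "Y \<inter> Z = {}" "Y \<union> Z = X"
    using d unfolding Aeq crossed_decomp_def prod.case by blast+
  have A': "(X, act, \<delta>) \<in> crossed_sets G" using A Aeq by simp
  let ?op = "\<lambda>x y. act (\<delta> x) y"
  note PY = piece_lemma[OF A' dd(3) dd(1)] and PZ = piece_lemma[OF A' dd(4) dd(2)]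
  have XR: "(X, ?op) \<in> finite_racks"
    using crossed_rack[OF A'] by (simp add: crossed_to_rack_def)
  have "rack_decomp X ?op Y Z" using PY(1) PZ(1) dd(5,6) by (simp add: rack_decomp_def)
  hence "frag_of (X, ?op) - frag_of (Y, ?op) - frag_of (Z, ?op) \<in> rack_rel_subgroup"
    using XR by (intro H_dec)
  from H_add[OF H_add[OF this PY(2)] PZ(2)]
  have "frag_of (X, ?op) - frag_of (crossed_to_rack (crossed_restrict A Y))
        - frag_of (crossed_to_rack (crossed_restrict A Z)) \<in> rack_rel_subgroup"
    unfolding Aeq by (simp add: algebra_simps)
  then show ?thesis
    by (simp add: r crossed_to_rack_free_def frag_extend_diff Aeq crossed_to_rack_def)
qed

lemma phi_K:
  assumes "k \<in> generate (free_crossed G) (crossed_relations G)"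
  shows "crossed_to_rack_free k \<in> rack_rel_subgroup"
  using assms
proof (induction k rule: generate.induct)
  case one
  then show ?case by (simp add: free_crossed_def crossed_to_rack_free_def H_zero)
next
  case (incl h)
  then show ?case by (rule phi_rel)
next
  case (inv h)
  have "Poly_Mapping.keys h \<subseteq> crossed_sets G"
    using crossed_relations_carrier inv by (force simp: free_crossed_def)
  then have "inv\<^bsub>free_crossed G\<^esub> h = - h" by (simp add: free_crossed_def)
  then show ?case using H_neg[OF phi_rel[OF inv]]
    by (simp add: crossed_to_rack_free_def frag_extend_minus)
next
  case (eng h1 h2)
  then show ?case using H_add
    by (simp add: free_crossed_def crossed_to_rack_free_def frag_extend_add)
qed


definition tr :: "('a, 'b) monoid_scheme \<Rightarrow> ('a \<Rightarrow> nat) \<Rightarrow> nat monoid" where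
  "tr H h = \<lparr>carrier = h ` carrier H,
     mult = (\<lambda>x y. h (inv_into (carrier H) h x \<otimes>\<^bsub>H\<^esub> inv_into (carrier H) h y)),
     one = h \<one>\<^bsub>H\<^esub>\<rparr>"

lemma tr_simps:
  "carrier (tr H h) = h ` carrier H"
  "x \<otimes>\<^bsub>tr H h\<^esub> y = h (inv_into (carrier H) h x \<otimes>\<^bsub>H\<^esub> inv_into (carrier H) h y)"
  "\<one>\<^bsub>tr H h\<^esub> = h \<one>\<^bsub>H\<^esub>"
  by (simp_all add: tr_def)

lemma tr_mult_h:
  assumes "inj_on h (carrier H)" "a \<in> carrier H" "b \<in> carrier H"
  shows "h a \<otimes>\<^bsub>tr H h\<^esub> h b = h (a \<otimes>\<^bsub>H\<^esub> b)"
  using assms by (simp add: tr_simps inv_into_f_f)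

lemma tr_group:
  assumes H: "group H" and inj: "inj_on h (carrier H)"
  shows "group (tr H h)"
proof (rule groupI)
  interpret H: group H by (rule H)
  fix x y assume "x \<in> carrier (tr H h)" "y \<in> carrier (tr H h)"
  then obtain a b where ab: "a \<in> carrier H" "b \<in> carrier H" "x = h a" "y = h b" by (auto simp: tr_simps)
  then show "x \<otimes>\<^bsub>tr H h\<^esub> y \<in> carrier (tr H h)" using tr_mult_h[OF inj] by (simp add: tr_simps)
next
  interpret H: group H by (rule H)
  show "\<one>\<^bsub>tr H h\<^esub> \<in> carrier (tr H h)" by (simp add: tr_simps)
next
  interpret H: group H by (rule H)
  fix x y z assume "x \<in> carrier (tr H h)" "y \<in> carrier (tr H h)" "z \<in> carrier (tr H h)"
  then obtain a b c where abc: "a \<in> carrier H" "b \<in> carrier H" "c \<in> carrier H" "x = h a" "y = h b" "z = h c"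
    by (auto simp: tr_simps)
  then show "x \<otimes>\<^bsub>tr H h\<^esub> y \<otimes>\<^bsub>tr H h\<^esub> z = x \<otimes>\<^bsub>tr H h\<^esub> (y \<otimes>\<^bsub>tr H h\<^esub> z)"
    using tr_mult_h[OF inj] by (simp add: H.m_assoc)
next
  interpret H: group H by (rule H)
  fix x assume "x \<in> carrier (tr H h)"
  then obtain a where a: "a \<in> carrier H" "x = h a" by (auto simp: tr_simps)
  then show "\<one>\<^bsub>tr H h\<^esub> \<otimes>\<^bsub>tr H h\<^esub> x = x"
    using tr_mult_h[OF inj, of "\<one>\<^bsub>H\<^esub>" a] by (simp add: tr_simps)
next
  interpret H: group H by (rule H)
  fix x assume "x \<in> carrier (tr H h)"
  then obtain a where a: "a \<in> carrier H" "x = h a" by (auto simp: tr_simps)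
  show "\<exists>y\<in>carrier (tr H h). y \<otimes>\<^bsub>tr H h\<^esub> x = \<one>\<^bsub>tr H h\<^esub>"
  proof (intro bexI)
    show "h (inv\<^bsub>H\<^esub> a) \<in> carrier (tr H h)" using a by (simp add: tr_simps)
    show "h (inv\<^bsub>H\<^esub> a) \<otimes>\<^bsub>tr H h\<^esub> x = \<one>\<^bsub>tr H h\<^esub>"
      using a tr_mult_h[OF inj, of "inv\<^bsub>H\<^esub> a" a] by (simp add: tr_simps)
  qed
qed

lemma tr_hom:
  assumes H: "group H" and inj: "inj_on h (carrier H)"
  shows "group_hom H (tr H h) h"
  unfolding group_hom_def group_hom_axioms_def
proof (intro conjI)
  show "group H" by (rule H)
  show "group (tr H h)" by (rule tr_group[OF H inj])
  show "h \<in> hom H (tr H h)"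
    unfolding hom_def using tr_mult_h[OF inj] by (auto simp: tr_simps)
qed


definition autR :: "nat set \<Rightarrow> (nat \<Rightarrow> nat \<Rightarrow> nat) \<Rightarrow> (nat \<Rightarrow> nat) set" where
  "autR R op = {f \<in> Bij R. \<forall>a\<in>R. \<forall>b\<in>R. f (op a b) = op (f a) (f b)}"

lemma bij_mult: "f \<in> Bij R \<Longrightarrow> g \<in> Bij R \<Longrightarrow> f \<otimes>\<^bsub>BijGroup R\<^esub> g = compose R f g"
  by (simp add: BijGroup_def)

lemma rack_closed: "is_rack R op \<Longrightarrow> a \<in> R \<Longrightarrow> b \<in> R \<Longrightarrow> op a b \<in> R"
  unfolding is_rack_def bij_betw_def by blast

lemma Bij_closed: "f \<in> Bij R \<Longrightarrow> a \<in> R \<Longrightarrow> f a \<in> R"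
  using Bij_imp_funcset by blast

lemma aut_subgroup:
  assumes rk: "is_rack R op"
  shows "subgroup (autR R op) (BijGroup R)"
proof
  show "autR R op \<subseteq> carrier (BijGroup R)" by (auto simp: autR_def BijGroup_def)
next
  fix f g assume f: "f \<in> autR R op" and g: "g \<in> autR R op"
  have fB: "f \<in> Bij R" and gB: "g \<in> Bij R" using f g by (auto simp: autR_def)
  have "compose R f g \<in> autR R op"
    unfolding autR_def
  proof (intro CollectI conjI ballI)
    show "compose R f g \<in> Bij R" by (rule compose_Bij[OF fB gB])
    fix a b assume a: "a \<in> R" and b: "b \<in> R"
    have "compose R f g (op a b) = f (g (op a b))" using rack_closed[OF rk a b] by (simp add: compose_def)
    also have "\<dots> = f (op (g a) (g b))" using g a b by (simp add: autR_def)
    also have "\<dots> = op (f (g a)) (f (g b))" using f Bij_closed[OF gB a] Bij_closed[OF gB b] by (simp add: autR_def)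
    finally show "compose R f g (op a b) = op (compose R f g a) (compose R f g b)"
      using a b by (simp add: compose_def)
  qed
  then show "f \<otimes>\<^bsub>BijGroup R\<^esub> g \<in> autR R op" using bij_mult[OF fB gB] by simp
next
  show "\<one>\<^bsub>BijGroup R\<^esub> \<in> autR R op"
    using id_Bij rack_closed[OF rk] by (simp add: BijGroup_def autR_def)
next
  fix f assume f: "f \<in> autR R op"
  have fB: "f \<in> Bij R" using f by (simp add: autR_def)
  have opR: "op \<in> R \<rightarrow> R \<rightarrow> R" using rack_closed[OF rk] by blast
  have "(\<lambda>x\<in>R. inv_into R f x) \<in> autR R op"
    unfolding autR_def
  proof (intro CollectI conjI ballI)
    show "(\<lambda>x\<in>R. inv_into R f x) \<in> Bij R" by (rule restrict_inv_into_Bij[OF fB])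
    fix a b assume a: "a \<in> R" and b: "b \<in> R"
    have "inv_into R f (op a b) = op (inv_into R f a) (inv_into R f b)"
      by (rule Bij_inv_into_lemma[OF _ fB opR a b]) (use f in \<open>simp add: autR_def\<close>)
    then show "(\<lambda>x\<in>R. inv_into R f x) (op a b) = op ((\<lambda>x\<in>R. inv_into R f x) a) ((\<lambda>x\<in>R. inv_into R f x) b)"
      using a b rack_closed[OF rk a b] by simp
  qed
  then show "inv\<^bsub>BijGroup R\<^esub> f \<in> autR R op" using inv_BijGroup[OF fB] by simp
qed

lemma lm_aut:
  assumes rk: "is_rack R op" and a: "a \<in> R"
  shows "restrict (op a) R \<in> autR R op"
  unfolding autR_def
proof (intro CollectI conjI ballI)
  have "bij_betw (op a) R R" using rk a by (simp add: is_rack_def)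
  then have "bij_betw (restrict (op a) R) R R" by (simp add: bij_betw_def inj_on_def image_def)
  then show "restrict (op a) R \<in> Bij R" by (simp add: Bij_def)
  fix b c assume b: "b \<in> R" and c: "c \<in> R"
  show "restrict (op a) R (op b c) = op (restrict (op a) R b) (restrict (op a) R c)"
    using rk a b c rack_closed[OF rk b c] by (simp add: is_rack_def)
qed

lemma finite_autR: "finite R \<Longrightarrow> finite (autR R op)"
proof -
  assume fin: "finite R"
  have "autR R op \<subseteq> PiE R (\<lambda>_. R)"
    by (auto simp: autR_def PiE_def dest: Bij_imp_funcset Bij_imp_extensional)
  moreover have "finite (PiE R (\<lambda>_. R))" using fin by (simp add: finite_PiE)
  ultimately show ?thesis by (rule finite_subset)
qed

lemma realize:
  assumes "(R, op) \<in> finite_racks"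
  shows "\<exists>(G::nat monoid) A. group G \<and> finite (carrier G) \<and> A \<in> crossed_sets G \<and>
            rack_iso (crossed_to_rack A) (R, op)"
proof -
  have fin: "finite R" and rk: "is_rack R op" using assms by (auto simp: finite_racks_def)
  let ?Aut = "autR R op"
  let ?AG = "(BijGroup R)\<lparr>carrier := ?Aut\<rparr>"
  have sub: "subgroup ?Aut (BijGroup R)" by (rule aut_subgroup[OF rk])
  have AGg: "group ?AG" by (rule subgroup.subgroup_is_group[OF sub group_BijGroup])
  have cAG: "carrier ?AG = ?Aut" by simp
  obtain h where hb: "bij_betw h ?Aut {0..<card ?Aut}"
    using ex_bij_betw_finite_nat[OF finite_autR[OF fin]] by blast
  have inj: "inj_on h (carrier ?AG)" using hb by (simp add: bij_betw_def)
  define G where "G = tr ?AG h"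
  have Gg: "group G" unfolding G_def by (rule tr_group[OF AGg inj])
  have hom: "group_hom ?AG G h" unfolding G_def by (rule tr_hom[OF AGg inj])
  have cG: "carrier G = h ` ?Aut" by (simp add: G_def tr_simps)
  have finG: "finite (carrier G)" using cG finite_autR[OF fin] by simp
  define act where "act = (\<lambda>g::nat. inv_into ?Aut h g)"
  define \<delta> where "\<delta> = (\<lambda>x. h (restrict (op x) R))"
  have act_h: "act (h f) = f" if "f \<in> ?Aut" for f
    using that inj by (simp add: act_def inv_into_f_f)
  have mulG: "h f \<otimes>\<^bsub>G\<^esub> h g = h (compose R f g)" if "f \<in> ?Aut" "g \<in> ?Aut" for f g
  proof -
    have "h f \<otimes>\<^bsub>G\<^esub> h g = h (f \<otimes>\<^bsub>?AG\<^esub> g)" unfolding G_def using tr_mult_h[OF inj] that by simp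
    also have "f \<otimes>\<^bsub>?AG\<^esub> g = compose R f g" using that bij_mult[of f R g] by (simp add: autR_def)
    finally show ?thesis .
  qed
  have autB: "f \<in> Bij R" if "f \<in> ?Aut" for f using that by (simp add: autR_def)
  have comp_aut: "compose R f g \<in> ?Aut" if "f \<in> ?Aut" "g \<in> ?Aut" for f g
    using subgroup.m_closed[OF sub that] bij_mult[OF autB[OF that(1)] autB[OF that(2)]] by simp
  have ga: "group_action G R act"
    unfolding group_action_def group_hom_def group_hom_axioms_def
  proof (intro conjI)
    show "group G" by (rule Gg)
    show "group (BijGroup R)" by (rule group_BijGroup)
    show "act \<in> hom G (BijGroup R)"
      unfolding hom_def
    proof (intro CollectI conjI ballI)
      show "act \<in> carrier G \<rightarrow> carrier (BijGroup R)"
        using act_h autB by (auto simp: cG BijGroup_def)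
    next
      fix x y assume "x \<in> carrier G" "y \<in> carrier G"
      then obtain f g where fg: "f \<in> ?Aut" "g \<in> ?Aut" "x = h f" "y = h g" by (auto simp: cG)
      show "act (x \<otimes>\<^bsub>G\<^esub> y) = act x \<otimes>\<^bsub>BijGroup R\<^esub> act y"
        using fg mulG act_h comp_aut bij_mult[OF autB autB] by simp
    qed
  qed
  have dc: "\<delta> x \<in> carrier G" if "x \<in> R" for x
    using lm_aut[OF rk that] by (simp add: \<delta>_def cG)
  have eq: "\<delta> (act g x) = g \<otimes>\<^bsub>G\<^esub> \<delta> x \<otimes>\<^bsub>G\<^esub> inv\<^bsub>G\<^esub> g" if g: "g \<in> carrier G" and x: "x \<in> R" for g x
  proof -
    obtain f where f: "f \<in> ?Aut" "g = h f" using g by (auto simp: cG)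
    have fB: "f \<in> Bij R" by (rule autB[OF f(1)])
    let ?l = "restrict (op x) R"
    have l: "?l \<in> ?Aut" by (rule lm_aut[OF rk x])
    let ?fi = "\<lambda>y\<in>R. inv_into R f y"
    have invf: "inv\<^bsub>?AG\<^esub> f = ?fi"
      using group.m_inv_consistent[OF group_BijGroup sub f(1)] inv_BijGroup[OF fB] by simp
    have fi: "?fi \<in> ?Aut" using subgroup.m_inv_closed[OF sub f(1)] inv_BijGroup[OF fB] by simp
    have "inv\<^bsub>G\<^esub> g = h (inv\<^bsub>?AG\<^esub> f)"
      using group_hom.hom_inv[OF hom, of f] f by simp
    then have ig: "inv\<^bsub>G\<^esub> (h f) = h ?fi" using invf f(2) by simp
    have "g \<otimes>\<^bsub>G\<^esub> \<delta> x \<otimes>\<^bsub>G\<^esub> inv\<^bsub>G\<^esub> g = h (compose R (compose R f ?l) ?fi)"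
      unfolding f(2) \<delta>_def ig using mulG f(1) l fi comp_aut by simp
    also have "compose R (compose R f ?l) ?fi = restrict (op (f x)) R"
    proof (rule ext)
      fix y show "compose R (compose R f ?l) ?fi y = restrict (op (f x)) R y"
      proof (cases "y \<in> R")
        case True
        have iy: "inv_into R f y \<in> R" by (rule Bij_inv_into_mem[OF fB True])
        have fy: "f (inv_into R f y) = y"
          using fB True by (simp add: Bij_def bij_betw_def f_inv_into_f)
        have "f (op x (inv_into R f y)) = op (f x) (f (inv_into R f y))"
          using f(1) x iy by (simp add: autR_def)
        then show ?thesis using True iy fy by (simp add: compose_def)
      qed (simp add: compose_def)
    qed
    finally show ?thesis using f act_h by (simp add: \<delta>_def restrict_def)
  qed
  have A: "(R, act, \<delta>) \<in> crossed_sets G"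
    unfolding crossed_sets_def mem_Collect_eq case_prod_conv
    using fin ga dc eq by blast
  have "rack_iso (crossed_to_rack (R, act, \<delta>)) (R, op)"
    unfolding crossed_to_rack_def prod.case rack_iso_def fst_conv snd_conv
  proof (intro exI[of _ id] conjI ballI)
    show "bij_betw id R R" by simp
    fix a b assume a: "a \<in> R" and b: "b \<in> R"
    show "id (act (\<delta> a) b) = op (id a) (id b)"
      using act_h[OF lm_aut[OF rk a]] b by (simp add: \<delta>_def)
  qed
  then show ?thesis using Gg finG A by blast
qed

lemma H_coset0: "rack_rel_subgroup #>\<^bsub>free_racks\<^esub> 0 = rack_rel_subgroup"
  using group.coset_mult_one[of free_racks rack_rel_subgroup] subgroup.subset[OF H_subgroup]
  by (simp add: free_racks_def)

lemma mulBR: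
  assumes "Poly_Mapping.keys a \<subseteq> finite_racks" "Poly_Mapping.keys b \<subseteq> finite_racks"
  shows "(rack_rel_subgroup #>\<^bsub>free_racks\<^esub> a) \<otimes>\<^bsub>burnside_racks\<^esub> (rack_rel_subgroup #>\<^bsub>free_racks\<^esub> b)
         = rack_rel_subgroup #>\<^bsub>free_racks\<^esub> (a + b)"
  using normal.rcos_sum[OF H_normal, of a b] assms
  by (simp add: burnside_racks_def free_racks_def)

lemma bm_coset:
  assumes "Poly_Mapping.keys d \<subseteq> crossed_sets G"
  shows "burnside_map (generate (free_crossed G) (crossed_relations G) #>\<^bsub>free_crossed G\<^esub> d)
         = rack_rel_subgroup #>\<^bsub>free_racks\<^esub> crossed_to_rack_free d"
proof -
  let ?K = "generate (free_crossed G) (crossed_relations G)"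
  let ?H = "rack_rel_subgroup"
  have kd: "Poly_Mapping.keys (crossed_to_rack_free d) \<subseteq> finite_racks"
    by (rule crossed_to_rack_free_carrier[OF assms])
  have eq: "?H #>\<^bsub>free_racks\<^esub> crossed_to_rack_free c = ?H #>\<^bsub>free_racks\<^esub> crossed_to_rack_free d"
    if c: "c \<in> ?K #>\<^bsub>free_crossed G\<^esub> d" for c
  proof -
    obtain k where k: "k \<in> ?K" and ck: "c = k + d"
      using c unfolding r_coset_def by (auto simp: free_crossed_def)
    have pk: "crossed_to_rack_free k \<in> ?H" by (rule phi_K[OF k])
    have pc: "crossed_to_rack_free c = crossed_to_rack_free k + crossed_to_rack_free d"
      by (simp add: ck crossed_to_rack_free_def frag_extend_add)
    have kk: "Poly_Mapping.keys (crossed_to_rack_free k) \<subseteq> finite_racks" by (rule H_carrier[OF pk])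
    have "Poly_Mapping.keys (crossed_to_rack_free c) \<subseteq> finite_racks"
      unfolding pc using kk kd keys_add[of "crossed_to_rack_free k" "crossed_to_rack_free d"] by blast
    then show ?thesis using coset_eq[OF _ kd] pk pc by simp
  qed
  have ne: "?K #>\<^bsub>free_crossed G\<^esub> d \<noteq> {}"
  proof -
    have "0 \<in> ?K" using generate.one[of "free_crossed G" "crossed_relations G"]
      by (simp add: free_crossed_def)
    then have "0 + d \<in> ?K #>\<^bsub>free_crossed G\<^esub> d" unfolding r_coset_def by (force simp: free_crossed_def)
    then show ?thesis by blast
  qed
  have "burnside_map (?K #>\<^bsub>free_crossed G\<^esub> d)
     = (\<Union>c\<in>?K #>\<^bsub>free_crossed G\<^esub> d. ?H #>\<^bsub>free_racks\<^esub> crossed_to_rack_free d)"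
    unfolding burnside_map_def using eq by (intro SUP_cong) auto
  also have "\<dots> = ?H #>\<^bsub>free_racks\<^esub> crossed_to_rack_free d" using ne by simp
  finally show ?thesis .
qed

definition FF :: "(nat monoid \<times> (nat crossed_set \<Rightarrow>\<^sub>0 int) set) list \<Rightarrow> (rack \<Rightarrow>\<^sub>0 int) set" where
  "FF ys = foldr (\<lambda>(G, y) acc. burnside_map y \<otimes>\<^bsub>burnside_racks\<^esub> acc) ys \<one>\<^bsub>burnside_racks\<^esub>"

definition good :: "(nat monoid \<times> (nat crossed_set \<Rightarrow>\<^sub>0 int) set) list \<Rightarrow> bool" where
  "good ys \<longleftrightarrow> (\<forall>(G, y) \<in> set ys. group G \<and> finite (carrier G) \<and> y \<in> carrier (crossed_burnside G))"

lemma bm_carrier: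
  assumes "y \<in> carrier (crossed_burnside G)"
  shows "\<exists>a. Poly_Mapping.keys a \<subseteq> finite_racks \<and> burnside_map y = rack_rel_subgroup #>\<^bsub>free_racks\<^esub> a"
proof -
  obtain d where d: "d \<in> carrier (free_crossed G)"
    and y: "y = generate (free_crossed G) (crossed_relations G) #>\<^bsub>free_crossed G\<^esub> d"
    using assms unfolding crossed_burnside_def carrier_FactGroup by blast
  have kd: "Poly_Mapping.keys d \<subseteq> crossed_sets G" using d by (simp add: free_crossed_def)
  show ?thesis using bm_coset[OF kd] crossed_to_rack_free_carrier[OF kd] y by blast
qed

lemma FF_coset: "good ys \<Longrightarrow> \<exists>c. Poly_Mapping.keys c \<subseteq> finite_racks \<and> FF ys = rack_rel_subgroup #>\<^bsub>free_racks\<^esub> c"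
proof (induction ys)
  case Nil
  then show ?case using H_coset0 by (intro exI[of _ 0]) (simp add: FF_def burnside_racks_def)
next
  case (Cons p ys)
  obtain G y where p: "p = (G, y)" by (cases p)
  have gy: "y \<in> carrier (crossed_burnside G)" and gys: "good ys" using Cons.prems p by (auto simp: good_def)
  obtain a where a: "Poly_Mapping.keys a \<subseteq> finite_racks" "burnside_map y = rack_rel_subgroup #>\<^bsub>free_racks\<^esub> a"
    using bm_carrier[OF gy] by blast
  obtain c where c: "Poly_Mapping.keys c \<subseteq> finite_racks" "FF ys = rack_rel_subgroup #>\<^bsub>free_racks\<^esub> c"
    using Cons.IH[OF gys] by blast
  have "FF (p # ys) = burnside_map y \<otimes>\<^bsub>burnside_racks\<^esub> FF ys" by (simp add: FF_def p)
  also have "\<dots> = rack_rel_subgroup #>\<^bsub>free_racks\<^esub> (a + c)" using a c mulBR by simp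
  finally show ?case using a(1) c(1) keys_add[of a c] by blast
qed

lemma FF_append:
  assumes "good ys" "good zs"
  shows "FF (ys @ zs) = FF ys \<otimes>\<^bsub>burnside_racks\<^esub> FF zs"
  using assms(1)
proof (induction ys)
  case Nil
  obtain c where c: "Poly_Mapping.keys c \<subseteq> finite_racks" "FF zs = rack_rel_subgroup #>\<^bsub>free_racks\<^esub> c"
    using FF_coset[OF assms(2)] by blast
  have "FF [] = rack_rel_subgroup #>\<^bsub>free_racks\<^esub> 0" using H_coset0 by (simp add: FF_def burnside_racks_def)
  then show ?case using c mulBR[of 0 c] by simp
next
  case (Cons p ys)
  obtain G y where p: "p = (G, y)" by (cases p)
  have gy: "y \<in> carrier (crossed_burnside G)" and gys: "good ys" using Cons.prems p by (auto simp: good_def)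
  obtain a where a: "Poly_Mapping.keys a \<subseteq> finite_racks" "burnside_map y = rack_rel_subgroup #>\<^bsub>free_racks\<^esub> a"
    using bm_carrier[OF gy] by blast
  obtain b where b: "Poly_Mapping.keys b \<subseteq> finite_racks" "FF ys = rack_rel_subgroup #>\<^bsub>free_racks\<^esub> b"
    using FF_coset[OF gys] by blast
  obtain c where c: "Poly_Mapping.keys c \<subseteq> finite_racks" "FF zs = rack_rel_subgroup #>\<^bsub>free_racks\<^esub> c"
    using FF_coset[OF assms(2)] by blast
  have kbc: "Poly_Mapping.keys (b + c) \<subseteq> finite_racks" using b c keys_add[of b c] by blast
  have kab: "Poly_Mapping.keys (a + b) \<subseteq> finite_racks" using a b keys_add[of a b] by blast
  have "FF ((p # ys) @ zs) = burnside_map y \<otimes>\<^bsub>burnside_racks\<^esub> FF (ys @ zs)" by (simp add: FF_def p)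
  also have "\<dots> = rack_rel_subgroup #>\<^bsub>free_racks\<^esub> (a + (b + c))"
    using Cons.IH[OF gys] a b c mulBR kbc by simp
  also have "\<dots> = rack_rel_subgroup #>\<^bsub>free_racks\<^esub> ((a + b) + c)" by (simp add: add.assoc)
  also have "\<dots> = FF (p # ys) \<otimes>\<^bsub>burnside_racks\<^esub> FF zs"
  proof -
    have "FF (p # ys) = burnside_map y \<otimes>\<^bsub>burnside_racks\<^esub> FF ys" by (simp add: FF_def p)
    then show ?thesis using a b c mulBR kab by simp
  qed
  finally show ?case .
qed

lemma single_good:
  assumes G: "group (G::nat monoid)" "finite (carrier G)" and A: "A \<in> crossed_sets G"
    and iso: "rack_iso (crossed_to_rack A) x" and x: "x \<in> finite_racks"
  shows "\<exists>ys. good ys \<and> rack_rel_subgroup #>\<^bsub>free_racks\<^esub> frag_of x = FF ys"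
    and "\<exists>ys. good ys \<and> rack_rel_subgroup #>\<^bsub>free_racks\<^esub> (- frag_of x) = FF ys"
proof -
  let ?K = "generate (free_crossed G) (crossed_relations G)"
  obtain X act \<delta> where Aeq: "A = (X, act, \<delta>)" by (cases A) auto
  have rA: "crossed_to_rack A \<in> finite_racks" using crossed_rack A Aeq by simp
  have rel: "frag_of (crossed_to_rack A) - frag_of x \<in> rack_rel_subgroup"
    by (rule H_iso[OF rA x iso])
  have k1: "Poly_Mapping.keys (frag_of A) \<subseteq> crossed_sets G" using A by (simp add: keys_frag_of)
  have k2: "Poly_Mapping.keys (- frag_of A) \<subseteq> crossed_sets G" using A by (simp add: keys_frag_of)
  have kx: "Poly_Mapping.keys (frag_of x) \<subseteq> finite_racks" using x by (simp add: keys_frag_of)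
  have kA: "Poly_Mapping.keys (frag_of (crossed_to_rack A)) \<subseteq> finite_racks" using rA by (simp add: keys_frag_of)
  have car: "?K #>\<^bsub>free_crossed G\<^esub> d \<in> carrier (crossed_burnside G)"
    if "Poly_Mapping.keys d \<subseteq> crossed_sets G" for d
    using that unfolding crossed_burnside_def carrier_FactGroup by (auto simp: free_crossed_def)
  have one: "FF [] = rack_rel_subgroup #>\<^bsub>free_racks\<^esub> 0"
    using H_coset0 by (simp add: FF_def burnside_racks_def)
  show "\<exists>ys. good ys \<and> rack_rel_subgroup #>\<^bsub>free_racks\<^esub> frag_of x = FF ys"
  proof (intro exI conjI)
    show "good [(G, ?K #>\<^bsub>free_crossed G\<^esub> frag_of A)]" using G car[OF k1] by (simp add: good_def)
    have "FF [(G, ?K #>\<^bsub>free_crossed G\<^esub> frag_of A)]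
        = burnside_map (?K #>\<^bsub>free_crossed G\<^esub> frag_of A) \<otimes>\<^bsub>burnside_racks\<^esub> FF []"
      by (simp add: FF_def)
    also have "\<dots> = rack_rel_subgroup #>\<^bsub>free_racks\<^esub> frag_of (crossed_to_rack A)"
      using bm_coset[OF k1] one mulBR[OF kA, of 0] by (simp add: crossed_to_rack_free_def)
    also have "\<dots> = rack_rel_subgroup #>\<^bsub>free_racks\<^esub> frag_of x"
      by (rule coset_eq[OF kA kx rel])
    finally show "rack_rel_subgroup #>\<^bsub>free_racks\<^esub> frag_of x = FF [(G, ?K #>\<^bsub>free_crossed G\<^esub> frag_of A)]" by simp
  qed
  show "\<exists>ys. good ys \<and> rack_rel_subgroup #>\<^bsub>free_racks\<^esub> (- frag_of x) = FF ys"
  proof (intro exI conjI)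
    show "good [(G, ?K #>\<^bsub>free_crossed G\<^esub> (- frag_of A))]" using G car[OF k2] by (simp add: good_def)
    have kA': "Poly_Mapping.keys (- frag_of (crossed_to_rack A)) \<subseteq> finite_racks" using kA by simp
    have "FF [(G, ?K #>\<^bsub>free_crossed G\<^esub> (- frag_of A))]
        = burnside_map (?K #>\<^bsub>free_crossed G\<^esub> (- frag_of A)) \<otimes>\<^bsub>burnside_racks\<^esub> FF []"
      by (simp add: FF_def)
    also have "\<dots> = rack_rel_subgroup #>\<^bsub>free_racks\<^esub> (- frag_of (crossed_to_rack A))"
      using bm_coset[OF k2] one mulBR[OF kA', of 0] by (simp add: crossed_to_rack_free_def frag_extend_minus)
    also have "\<dots> = rack_rel_subgroup #>\<^bsub>free_racks\<^esub> (- frag_of x)"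
      using coset_eq[of "- frag_of (crossed_to_rack A)" "- frag_of x"] kA kx H_neg[OF rel] by simp
    finally show "rack_rel_subgroup #>\<^bsub>free_racks\<^esub> (- frag_of x) = FF [(G, ?K #>\<^bsub>free_crossed G\<^esub> (- frag_of A))]" by simp
  qed
qed

theorem proposition8p11:
  shows "\<forall>x \<in> carrier burnside_racks.
           \<exists>ys :: (nat monoid \<times> (nat crossed_set \<Rightarrow>\<^sub>0 int) set) list.
             (\<forall>(G, y) \<in> set ys. group G \<and> finite (carrier G) \<and> y \<in> carrier (crossed_burnside G)) \<and>
             x = foldr (\<lambda>(G, y) acc. burnside_map y \<otimes>\<^bsub>burnside_racks\<^esub> acc) ys \<one>\<^bsub>burnside_racks\<^esub>"
proof
  fix x assume "x \<in> carrier burnside_racks"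
  then obtain c where c: "c \<in> carrier free_racks" and xc: "x = rack_rel_subgroup #>\<^bsub>free_racks\<^esub> c"
    unfolding burnside_racks_def carrier_FactGroup by blast
  have kc: "Poly_Mapping.keys c \<subseteq> finite_racks" using c by (simp add: free_racks_def)
  let ?P = "\<lambda>c. Poly_Mapping.keys c \<subseteq> finite_racks \<and>
     (\<exists>ys. good ys \<and> rack_rel_subgroup #>\<^bsub>free_racks\<^esub> c = FF ys) \<and>
     (\<exists>ys. good ys \<and> rack_rel_subgroup #>\<^bsub>free_racks\<^esub> (- c) = FF ys)"
  have "?P c" using kc
  proof (induction c rule: frag_induction)
    case zero
    have "FF [] = rack_rel_subgroup #>\<^bsub>free_racks\<^esub> 0"
      using H_coset0 by (simp add: FF_def burnside_racks_def)
    then have e: "\<exists>ys. good ys \<and> rack_rel_subgroup #>\<^bsub>free_racks\<^esub> 0 = FF ys"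
      by (intro exI[of _ "[]"]) (simp add: good_def)
    have "Poly_Mapping.keys (0 :: rack \<Rightarrow>\<^sub>0 int) \<subseteq> finite_racks" by simp
    moreover have "(- 0 :: rack \<Rightarrow>\<^sub>0 int) = 0" by simp
    ultimately show ?case using e by metis
  next
    case (one r)
    obtain R op where r: "r = (R, op)" by (cases r)
    obtain G :: "nat monoid" and A where GA: "group G" "finite (carrier G)" "A \<in> crossed_sets G"
       "rack_iso (crossed_to_rack A) r"
      using realize[of R op] one r by blast
    show ?case using single_good[OF GA one] one by (simp add: keys_frag_of)
  next
    case (diff a b)
    have ka: "Poly_Mapping.keys a \<subseteq> finite_racks" and kb: "Poly_Mapping.keys b \<subseteq> finite_racks"
      using diff by auto
    obtain ya where ya: "good ya" "rack_rel_subgroup #>\<^bsub>free_racks\<^esub> a = FF ya" using diff by blast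
    obtain yna where yna: "good yna" "rack_rel_subgroup #>\<^bsub>free_racks\<^esub> (- a) = FF yna" using diff by blast
    obtain yb where yb: "good yb" "rack_rel_subgroup #>\<^bsub>free_racks\<^esub> b = FF yb" using diff by blast
    obtain ynb where ynb: "good ynb" "rack_rel_subgroup #>\<^bsub>free_racks\<^esub> (- b) = FF ynb" using diff by blast
    have gapp: "good (xs @ zs)" if "good xs" "good zs" for xs zs using that by (auto simp: good_def)
    have k1: "Poly_Mapping.keys (a - b) \<subseteq> finite_racks" using ka kb keys_diff[of a b] by blast
    have e1: "rack_rel_subgroup #>\<^bsub>free_racks\<^esub> (a - b) = FF (ya @ ynb)"
      using FF_append[OF ya(1) ynb(1)] ya(2) ynb(2) mulBR[OF ka, of "- b"] kb by simp
    have e2: "rack_rel_subgroup #>\<^bsub>free_racks\<^esub> (- (a - b)) = FF (yna @ yb)"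
      using FF_append[OF yna(1) yb(1)] yna(2) yb(2) mulBR[of "- a" b] ka kb by simp
    have g1: "good (ya @ ynb)" by (rule gapp[OF ya(1) ynb(1)])
    have g2: "good (yna @ yb)" by (rule gapp[OF yna(1) yb(1)])
    show ?case using k1 g1 g2 e1 e2 by (intro conjI exI[of _ "ya @ ynb"] exI[of _ "yna @ yb"])
  qed
  then obtain ys where "good ys" "x = FF ys" using xc by blast
  then show "\<exists>ys :: (nat monoid \<times> (nat crossed_set \<Rightarrow>\<^sub>0 int) set) list.
             (\<forall>(G, y) \<in> set ys. group G \<and> finite (carrier G) \<and> y \<in> carrier (crossed_burnside G)) \<and>
             x = foldr (\<lambda>(G, y) acc. burnside_map y \<otimes>\<^bsub>burnside_racks\<^esub> acc) ys \<one>\<^bsub>burnside_racks\<^esub>"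
    unfolding good_def FF_def by blast
qed

end
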